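(* Let $\mathbb{X}=\{0,1\}^{\mathbb{N}}$ with the metric $d$ and let $\mu$ be the measure on $\mathbb{X}$ defined below from a family $\mathcal{L}$ of cylinders and numbers $0<p_0\le p_1$ with $p_0+p_1=1$. Let $E=\{q=(q_1,q_2)\in\mathbb{R}^2: q_1+q_2\ge0\}$, and let $\chi:\mathbb{X}\times\left]0,1\right]\to(\mathbb{R}^2)'$ satisfy: for every $q=(q_1,q_2)\in\mathbb{R}^2$ and every $\lambda>0$ there is $r_0>0$ such that for all $x\in\mathbb{X}$ and $r<r_0$, $$r^{\lambda}\mu(B(x,r))^{q_1+q_2}\le e^{\langle q,\chi(x,r)\rangle}\le r^{-\lambda}\mu(B(x,r))^{q_1+q_2}.$$ Let $a>0$ and $\alpha\in(\mathbb{R}^2)'$ with $\langle q,\alpha\rangle=a(q_1+q_2)$. Then $$\left\{x\in\mathbb{X}:\limsup_{r\to0}\frac{\langle q,\chi(x,r)\rangle}{\log r}\le\langle q,\alpha\rangle\ \forall q\in E\right\}=\left\{x\in\mathbb{X}:\limsup_{r\to0}\frac{\log\mu(B(x,r))}{\log r}\le a\right\}.$$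
   Context: For $x=(x_i)_{i\ge0},y=(y_i)_{i\ge0}\in\mathbb{X}$, $d(x,y)=0$ if $x=y$ and $d(x,y)=2^{-n}$ if $x_n\ne y_n$ and $x_i=y_i$ for $0\le i<n$. For a finite word $j=j_0\dots j_{n-1}$ over $\{0,1\}$, the cylinder is $[j]=\{jx:x\in\mathbb{X}\}$. $\mathcal{L}$ is a family of cylinders (its elements are called selected cylinders). $\mu$ is the Borel probability measure with $\mu(\mathbb{X})=1$ and, for every cylinder $[j]$ and $l\in\{0,1\}$, $\mu([jl])=p_l\,\mu([j])$ if $[j]$ contains a selected cylinder, and $\mu([jl])=\mu([j])/2$ otherwise. *)

theory Defs
  imports "HOL-Probability.Probability"
begin

text \<open>The space X = {0,1}^N is modelled as nat \<Rightarrow> bool (False = 0, True = 1).\<close>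

definition dX :: "(nat \<Rightarrow> bool) \<Rightarrow> (nat \<Rightarrow> bool) \<Rightarrow> real" where
  "dX x y = (if x = y then 0 else (1/2) ^ (LEAST n. x n \<noteq> y n))"

definition ballX :: "(nat \<Rightarrow> bool) \<Rightarrow> real \<Rightarrow> (nat \<Rightarrow> bool) set" where
  "ballX x r = {y. dX x y < r}"

definition openX :: "(nat \<Rightarrow> bool) set \<Rightarrow> bool" where
  "openX U \<longleftrightarrow> (\<forall>x\<in>U. \<exists>e>0. ballX x e \<subseteq> U)"

definition borelX :: "(nat \<Rightarrow> bool) set set" where
  "borelX = sigma_sets UNIV {U. openX U}"

definition cyl :: "bool list \<Rightarrow> (nat \<Rightarrow> bool) set" where
  "cyl j = {x. \<forall>i<length j. x i = j ! i}"

text \<open>[j] contains a selected cylinder; the family L of cylinders is given by their words.\<close>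
definition contains_selected :: "bool list set \<Rightarrow> bool list \<Rightarrow> bool" where
  "contains_selected L j \<longleftrightarrow> (\<exists>w\<in>L. cyl w \<subseteq> cyl j)"

end

theory Submission
  imports Defs
begin

lemma limsupA:
  fixes g :: "real \<Rightarrow> real"
  assumes "\<And>e. e > 0 \<Longrightarrow> eventually (\<lambda>r. g r \<le> c + e) F"
  shows "Limsup F (\<lambda>r. ereal (g r)) \<le> ereal c"
proof (rule ereal_le_epsilon2)
  fix e :: real assume "0 < e"
  have "eventually (\<lambda>r. ereal (g r) \<le> ereal c + ereal e) F"
    using assms[OF \<open>0 < e\<close>] by (rule eventually_mono) simp
  then show "Limsup F (\<lambda>r. ereal (g r)) \<le> ereal c + ereal e"
    by (rule Limsup_bounded)
qed

lemma limsupB: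
  fixes g :: "real \<Rightarrow> real"
  assumes "Limsup F (\<lambda>r. ereal (g r)) \<le> ereal c" "e > 0"
  shows "eventually (\<lambda>r. g r \<le> c + e) F"
proof -
  have "Limsup F (\<lambda>r. ereal (g r)) < ereal (c + e)"
    using assms(1) by (rule le_less_trans) (use assms(2) in simp)
  from Limsup_lessD[OF this] show ?thesis
    by (rule eventually_mono) simp
qed

lemma key:
  fixes r lam m s c :: real
  assumes "0<r" "r<1" "0 < lam" "r powr lam * m powr s \<le> exp c"
    "exp c \<le> r powr (-lam) * m powr s" "m \<ge> 0"
  shows "c/ln r \<le> s*(ln m/ln r) + lam \<and> s*(ln m/ln r) - lam \<le> c/ln r"
proof -
  have "m powr s > 0"
    using assms(5) by (smt (verit) exp_gt_zero mult_nonneg_nonpos powr_ge_zero)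
  then have m: "m > 0" using assms(6) by (metis less_eq_real_def powr_0 less_irrefl)
  have lr: "ln r < 0" using assms by simp
  have pp: "r powr lam * m powr s > 0" "r powr (-lam) * m powr s > 0"
    using \<open>m powr s > 0\<close> assms(1) by simp_all
  have "ln (r powr lam * m powr s) \<le> ln (exp c)"
    using assms(4) pp by (subst ln_le_cancel_iff) auto
  then have "ln (r powr lam * m powr s) \<le> c" by simp
  then have 1: "lam * ln r + s * ln m \<le> c"
    using m assms(1) by (simp add: ln_mult ln_powr)
  have "ln (exp c) \<le> ln (r powr (-lam) * m powr s)"
    using assms(5) pp by (subst ln_le_cancel_iff) auto
  then have "c \<le> ln (r powr (-lam) * m powr s)" by simp
  then have 2: "c \<le> -lam * ln r + s * ln m"
    using m assms(1) by (simp add: ln_mult ln_powr)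
  have "c/ln r \<le> (lam * ln r + s * ln m)/ln r"
    using 1 lr by (simp add: divide_right_mono_neg)
  moreover have "(-lam * ln r + s * ln m)/ln r \<le> c/ln r"
    using 2 lr by (simp add: divide_right_mono_neg)
  ultimately show ?thesis using lr by (simp add: field_simps)
qed

theorem proposition3:
  fixes L :: "bool list set" and p0 p1 :: real and M :: "(nat \<Rightarrow> bool) measure"
    and chi :: "(nat \<Rightarrow> bool) \<Rightarrow> real \<Rightarrow> (real \<times> real \<Rightarrow> real)"
    and a :: real and \<alpha> :: "real \<times> real \<Rightarrow> real"
  assumes p: "0 < p0" "p0 \<le> p1" "p0 + p1 = 1"
    and M_prob: "prob_space M" and M_space: "space M = UNIV" and M_sets: "sets M = borelX"
    and M_cyl: "\<And>j l. measure M (cyl (j @ [l])) =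
        (if contains_selected L j then (if l then p1 else p0) * measure M (cyl j)
         else measure M (cyl j) / 2)"
    and chi_lin: "\<And>x r. 0 < r \<Longrightarrow> r \<le> 1 \<Longrightarrow> linear (chi x r)"
    and chi_bound: "\<And>q lam. lam > 0 \<Longrightarrow> \<exists>r0>0. \<forall>x r. 0 < r \<and> r \<le> 1 \<and> r < r0 \<longrightarrow>
        r powr lam * measure M (ballX x r) powr (fst q + snd q) \<le> exp (chi x r q) \<and>
        exp (chi x r q) \<le> r powr (-lam) * measure M (ballX x r) powr (fst q + snd q)"
    and a_pos: "a > 0"
    and \<alpha>_lin: "linear \<alpha>" and \<alpha>_def: "\<And>q. \<alpha> q = a * (fst q + snd q)"
  shows "{x. \<forall>q\<in>{q :: real \<times> real. fst q + snd q \<ge> 0}.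
            Limsup (at_right 0) (\<lambda>r. ereal (chi x r q / ln r)) \<le> ereal (\<alpha> q)}
       = {x. Limsup (at_right 0) (\<lambda>r. ereal (ln (measure M (ballX x r)) / ln r)) \<le> ereal a}"
proof -
  define f where "f x r = ln (measure M (ballX x r)) / ln r" for x r
  have ev: "eventually (\<lambda>r. chi x r q / ln r \<le> (fst q + snd q) * f x r + lam \<and>
              (fst q + snd q) * f x r - lam \<le> chi x r q / ln r) (at_right 0)"
    if lam0: "lam > 0" for x q lam
  proof -
    obtain r0 where r0: "r0 > 0" "\<forall>x r. 0 < r \<and> r \<le> 1 \<and> r < r0 \<longrightarrow>
        r powr lam * measure M (ballX x r) powr (fst q + snd q) \<le> exp (chi x r q) \<and>
        exp (chi x r q) \<le> r powr (-lam) * measure M (ballX x r) powr (fst q + snd q)"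
      using chi_bound[OF lam0] by blast
    have P: "chi x r q / ln r \<le> (fst q + snd q) * f x r + lam \<and>
              (fst q + snd q) * f x r - lam \<le> chi x r q / ln r"
      if "0 < r" "r < min r0 1" for r
      using key[of r lam "measure M (ballX x r)" "fst q + snd q" "chi x r q"] r0(2) lam0 that
      unfolding f_def by auto
    show ?thesis unfolding eventually_at_right_field
      using P r0(1) by (intro exI[of _ "min r0 1"]) auto
  qed
  show ?thesis
  proof (intro set_eqI iffI; simp only: mem_Collect_eq f_def[symmetric])
    fix x
    assume H: "\<forall>q\<in>{q :: real \<times> real. fst q + snd q \<ge> 0}.
            Limsup (at_right 0) (\<lambda>r. ereal (chi x r q / ln r)) \<le> ereal (\<alpha> q)"
    have L1: "Limsup (at_right 0) (\<lambda>r. ereal (chi x r (1,0) / ln r)) \<le> ereal a"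
      using H[rule_format, of "(1,0)"] \<alpha>_def[of "(1,0)"] by simp
    show "Limsup (at_right 0) (\<lambda>r. ereal (f x r)) \<le> ereal a"
    proof (rule limsupA)
      fix e :: real assume e: "e > 0"
      have "eventually (\<lambda>r. chi x r (1,0) / ln r \<le> a + e/2) (at_right 0)"
        using limsupB[OF L1] e by simp
      moreover have "eventually (\<lambda>r. chi x r (1,0) / ln r \<le> 1 * f x r + e/2 \<and>
              1 * f x r - e/2 \<le> chi x r (1,0) / ln r) (at_right 0)"
        using ev[of "e/2" x "(1,0)"] e by simp
      ultimately show "eventually (\<lambda>r. f x r \<le> a + e) (at_right 0)"
        by eventually_elim simp
    qed
  next
    fix x
    assume H: "Limsup (at_right 0) (\<lambda>r. ereal (f x r)) \<le> ereal a"
    show "\<forall>q\<in>{q :: real \<times> real. fst q + snd q \<ge> 0}.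
            Limsup (at_right 0) (\<lambda>r. ereal (chi x r q / ln r)) \<le> ereal (\<alpha> q)"
    proof
      fix q :: "real \<times> real" assume "q \<in> {q :: real \<times> real. fst q + snd q \<ge> 0}"
      then have s: "fst q + snd q \<ge> 0" by simp
      define s where "s = fst q + snd q"
      show "Limsup (at_right 0) (\<lambda>r. ereal (chi x r q / ln r)) \<le> ereal (\<alpha> q)"
        unfolding \<alpha>_def
      proof (rule limsupA)
        fix e :: real assume e: "e > 0"
        define d where "d = e / (2 * (s + 1))"
        have d: "d > 0" "s * d \<le> e/2" using e s unfolding d_def s_def
          by (auto simp: field_simps)
        have "eventually (\<lambda>r. f x r \<le> a + d) (at_right 0)"
          using limsupB[OF H d(1)] .
        moreover have "eventually (\<lambda>r. chi x r q / ln r \<le> s * f x r + e/2 \<and>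
              s * f x r - e/2 \<le> chi x r q / ln r) (at_right 0)"
          using ev[of "e/2" x q] e unfolding s_def by simp
        ultimately show "eventually (\<lambda>r. chi x r q / ln r \<le> a * (fst q + snd q) + e) (at_right 0)"
        proof eventually_elim
          case (elim r)
          have "s * f x r \<le> s * (a + d)" using elim(1) s unfolding s_def
            by (simp add: mult_left_mono)
          then show ?case using elim(2) d(2) unfolding s_def by (simp add: algebra_simps)
        qed
      qed
    qed
  qed
qed

end
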